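(* Fix $0<p<1$ and $\lambda>0$, and for each $n$ let $\Delta=\Delta(n)=\frac{-\ln\left(1-\sqrt[n]{p}\right)}{\lambda}$. Then the expected response time of the protocol $\mathrm{CORE}(\Delta)$ in the $\mathrm{EDD}(\lambda)$ model with a global clock satisfies $\mathbb{E}[RT]\in O\!\left(\frac{\log n}{\lambda}\right)$ as $n\to\infty$.
   Context: Agents $i_0,i_1,\ldots,i_n$ share an accurate global clock and are connected by a complete reliable network; the delay of each message is an independent exponential random variable with parameter $\lambda$. At time $0$ the supervisor $i_0$ receives an external input. Protocol $\mathrm{CORE}(\Delta)$: at time $0$, $i_0$ sends a "trigger" message to each of $i_1,\ldots,i_n$; upon receiving the trigger, agent $i_k$ waits until the global time is at least $\Delta$ and then performs its action $\alpha_k$ (acting immediately if the trigger arrives after time $\Delta$). With $t_k$ the time at which $i_k$ performs $\alpha_k$, the response time is $RT=\max\{t_1,\ldots,t_n\}$. *)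

theory Defs
  imports "HOL-Probability.Probability" "HOL-Library.Landau_Symbols"
begin

text \<open>The joint law of the delays of the trigger messages to agents 1..n is the
  product measure of n copies of the exponential distribution.\<close>

definition EDD_delay :: "real \<Rightarrow> real measure" where
  "EDD_delay l = density lborel (exponential_density l)"

definition EDD_delays :: "real \<Rightarrow> nat \<Rightarrow> (nat \<Rightarrow> real) measure" where
  "EDD_delays l n = PiM {1..n} (\<lambda>_. EDD_delay l)"

text \<open>Protocol CORE(Delta): agent k receives the trigger at time d k (sent at time 0) and acts
  at time max Delta (d k). The response time is the maximum over k = 1..n.\<close>

definition CORE_RT :: "real \<Rightarrow> nat \<Rightarrow> (nat \<Rightarrow> real) \<Rightarrow> real" where
  "CORE_RT Delta n d = Max ((\<lambda>k. max Delta (d k)) ` {1..n})"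

definition expected_CORE_RT :: "real \<Rightarrow> real \<Rightarrow> nat \<Rightarrow> real" where
  "expected_CORE_RT l Delta n = integral\<^sup>L (EDD_delays l n) (CORE_RT Delta n)"

definition CORE_Delta :: "real \<Rightarrow> real \<Rightarrow> nat \<Rightarrow> real" where
  "CORE_Delta p l n = - ln (1 - root n p) / l"

end

theory Submission
  imports Defs
begin

lemma shift_int:
  fixes l a :: real assumes l: "0 < l" and a: "0 \<le> a"
  shows "has_bochner_integral (EDD_delay l) (\<lambda>x. max 0 (x - a)) (exp (- l * a) / l)"
proof (rule has_bochner_integral_nn_integral)
  show "(\<lambda>x. max 0 (x - a)) \<in> borel_measurable (EDD_delay l)"
    unfolding EDD_delay_def by measurable
  show "AE x in EDD_delay l. 0 \<le> max 0 (x - a)" by simp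
  show "0 \<le> exp (- l * a) / l" using l by simp
  have "(\<integral>\<^sup>+ x. ennreal (max 0 (x - a)) \<partial>EDD_delay l)
      = (\<integral>\<^sup>+ x. ennreal (exponential_density l x) * ennreal (max 0 (x - a)) \<partial>lborel)"
    unfolding EDD_delay_def
    by (subst nn_integral_density) (auto simp: exponential_density_nonneg l)
  also have "\<dots> = (\<integral>\<^sup>+ x. ennreal (exponential_density l x * max 0 (x - a)) \<partial>lborel)"
    using l by (intro nn_integral_cong) (simp add: ennreal_mult exponential_density_nonneg)
  also have "\<dots> = ennreal \<bar>1\<bar> * (\<integral>\<^sup>+ x. ennreal (exponential_density l (a + 1 * x) * max 0 (a + 1 * x - a)) \<partial>lborel)"
    by (rule nn_integral_real_affine) auto
  also have "\<dots> = (\<integral>\<^sup>+ x. ennreal (exp (- l * a)) * ennreal (erlang_density 0 l x * x ^ 1) \<partial>lborel)"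
  proof (simp, intro nn_integral_cong)
    fix x :: real
    show "ennreal (exponential_density l (a + x) * max 0 x) = ennreal (exp (- (l * a))) * ennreal (exponential_density l x * x)"
      using a l by (auto simp: exponential_density_def ennreal_mult[symmetric] mult_exp_exp algebra_simps)
  qed
  also have "\<dots> = ennreal (exp (- l * a)) * (\<integral>\<^sup>+ x. ennreal (erlang_density 0 l x * x ^ 1) \<partial>lborel)"
    by (rule nn_integral_cmult) auto
  also have "\<dots> = ennreal (exp (- l * a) / l)"
    using l nn_integral_erlang_ith_moment[OF l, of 0 1]
    by (simp add: ennreal_mult[symmetric] divide_ennreal)
  finally show "(\<integral>\<^sup>+ x. ennreal (max 0 (x - a)) \<partial>EDD_delay l) = ennreal (exp (- l * a) / l)" .
qed

lemma RT_bound: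
  fixes l a :: real assumes l: "0 < l" and a: "0 \<le> a" and n: "1 \<le> n"
  shows "0 \<le> expected_CORE_RT l a n \<and> expected_CORE_RT l a n \<le> a + real n * (exp (- l * a) / l)"
proof -
  let ?D = "EDD_delay l"
  let ?M = "EDD_delays l n"
  interpret D: prob_space ?D unfolding EDD_delay_def by (rule prob_space_exponential_density[OF l])
  interpret P: product_prob_space "\<lambda>_. ?D" "{1..n}" by unfold_locales
  interpret M: prob_space ?M unfolding EDD_delays_def by (rule prob_space_PiM) (rule D.prob_space_axioms)
  have comp: "integral\<^sup>L ?M (\<lambda>d. max 0 (d k - a)) = exp (- l * a) / l"
     "integrable ?M (\<lambda>d. max 0 (d k - a))" if k: "k \<in> {1..n}" for k
  proof -
    have dist: "distr ?M ?D (\<lambda>\<omega>. \<omega> k) = ?D" unfolding EDD_delays_def by (rule P.PiM_component[OF k])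
    have meas: "(\<lambda>\<omega>. \<omega> k) \<in> measurable ?M ?D" unfolding EDD_delays_def using k by measurable
    have fm: "(\<lambda>x. max 0 (x - a)) \<in> borel_measurable ?D" unfolding EDD_delay_def by measurable
    have "integral\<^sup>L ?M (\<lambda>d. max 0 (d k - a)) = integral\<^sup>L (distr ?M ?D (\<lambda>\<omega>. \<omega> k)) (\<lambda>x. max 0 (x - a))"
      by (rule integral_distr[OF meas fm, symmetric])
    also have "\<dots> = exp (- l * a) / l" using dist shift_int[OF l a] has_bochner_integral_integral_eq by simp
    finally show "integral\<^sup>L ?M (\<lambda>d. max 0 (d k - a)) = exp (- l * a) / l" .
    have "integrable (distr ?M ?D (\<lambda>\<omega>. \<omega> k)) (\<lambda>x. max 0 (x - a))"
      using dist shift_int[OF l a] integrable.intros by simp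
    then show "integrable ?M (\<lambda>d. max 0 (d k - a))" using integrable_distr_eq[OF meas fm] by simp
  qed
  define g where "g = (\<lambda>d. a + (\<Sum>k\<in>{1..n}. max 0 (d k - a)))"
  have gi: "integrable ?M g" unfolding g_def
    by (intro Bochner_Integration.integrable_add integrable_const Bochner_Integration.integrable_sum[where f="\<lambda>k (d::nat\<Rightarrow>real). max 0 (d k - a)"] comp(2)) auto
  have gint: "integral\<^sup>L ?M g = a + real n * (exp (- l * a) / l)"
  proof -
    have s: "integrable ?M (\<lambda>d. \<Sum>k\<in>{1..n}. max 0 (d k - a))"
      by (intro Bochner_Integration.integrable_sum[where f="\<lambda>k (d::nat\<Rightarrow>real). max 0 (d k - a)"] comp(2))
    have "integral\<^sup>L ?M g = a + integral\<^sup>L ?M (\<lambda>d. \<Sum>k\<in>{1..n}. max 0 (d k - a))"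
      unfolding g_def by (subst Bochner_Integration.integral_add[OF _ s]) (auto simp: M.prob_space)
    also have "integral\<^sup>L ?M (\<lambda>d. \<Sum>k\<in>{1..n}. max 0 (d k - a)) = (\<Sum>k\<in>{1..n}. integral\<^sup>L ?M (\<lambda>d. max 0 (d k - a)))"
      by (rule Bochner_Integration.integral_sum[where f="\<lambda>k (d::nat\<Rightarrow>real). max 0 (d k - a)"]) (rule comp(2))
    also have "\<dots> = (\<Sum>k\<in>{1..n}. exp (- l * a) / l)" by (rule sum.cong) (auto simp: comp(1))
    finally show ?thesis by simp
  qed
  have ptw: "a \<le> CORE_RT a n d \<and> CORE_RT a n d \<le> g d" for d
  proof -
    have ne: "(\<lambda>k. max a (d k)) ` {1..n} \<noteq> {}" using n by auto
    have "max a (d k) \<le> g d" if "k \<in> {1..n}" for k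
    proof -
      have "max 0 (d k - a) \<le> (\<Sum>k\<in>{1..n}. max 0 (d k - a))"
        by (rule member_le_sum) (use that in auto)
      then show ?thesis unfolding g_def by linarith
    qed
    then have "CORE_RT a n d \<le> g d" unfolding CORE_RT_def using ne by (subst Max_le_iff) auto
    moreover have "a \<le> CORE_RT a n d" unfolding CORE_RT_def using n
      by (intro Max_ge_iff[THEN iffD2]) (auto intro!: bexI[of _ 1])
    ultimately show ?thesis by simp
  qed
  have ptw2: "\<bar>CORE_RT a n d\<bar> \<le> \<bar>g d\<bar>" for d using ptw[of d] a by linarith
  have rm: "CORE_RT a n \<in> borel_measurable ?M" unfolding CORE_RT_def EDD_delays_def
  proof (rule borel_measurable_Max)
    fix k assume k: "k \<in> {1..n}"
    show "(\<lambda>x. max a (x k)) \<in> borel_measurable (PiM {1..n} (\<lambda>_. EDD_delay l))"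
    proof -
      have "(\<lambda>x. x k) \<in> measurable (PiM {1..n} (\<lambda>_. EDD_delay l)) (EDD_delay l)"
        using k by (rule measurable_component_singleton)
      moreover have "sets (EDD_delay l) = sets borel" by (simp add: EDD_delay_def)
      ultimately have [measurable]: "(\<lambda>x. x k) \<in> borel_measurable (PiM {1..n} (\<lambda>_. EDD_delay l))"
        using measurable_cong_sets by blast
      show ?thesis by measurable
    qed
  qed simp
  have ri: "integrable ?M (CORE_RT a n)"
    by (rule Bochner_Integration.integrable_bound[OF gi rm]) (use ptw2 in auto)
  have "expected_CORE_RT l a n \<le> integral\<^sup>L ?M g"
    unfolding expected_CORE_RT_def by (rule Bochner_Integration.integral_mono[OF ri gi]) (use ptw in auto)
  moreover have "0 \<le> expected_CORE_RT l a n"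
    unfolding expected_CORE_RT_def by (rule integral_nonneg_AE) (use ptw a in \<open>auto intro!: AE_I2 order.trans[OF a]\<close>)
  ultimately show ?thesis using gint by simp
qed

lemma delta_facts:
  fixes p l :: real assumes p: "0 < p" "p < 1" and l: "0 < l" and n: "1 \<le> n"
  defines "c \<equiv> - ln p"
  shows "0 \<le> CORE_Delta p l n \<and> exp (- l * CORE_Delta p l n) \<le> c / real n
     \<and> l * CORE_Delta p l n \<le> ln (real n) + ln (1 + 1 / c)"
proof -
  have c: "0 < c" unfolding c_def using p by simp
  have nr: "0 < real n" using n by simp
  define y where "y = c / real n"
  have y: "0 < y" unfolding y_def using c nr by simp
  have r: "root n p = exp (- y)"
    using n p by (simp add: root_powr_inverse powr_def y_def c_def)
  have r1: "exp (- y) < 1" using y by simp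
  have lD: "l * CORE_Delta p l n = - ln (1 - exp (- y))"
    unfolding CORE_Delta_def r using l by simp
  have e1: "1 - exp (- y) \<le> y" using exp_ge_add_one_self[of "- y"] by linarith
  have e2: "y / (1 + y) \<le> 1 - exp (- y)"
  proof -
    have "1 + y \<le> exp y" by (rule exp_ge_add_one_self)
    then have "exp (- y) \<le> 1 / (1 + y)" using y by (simp add: exp_minus field_simps)
    then show ?thesis using y by (simp add: field_simps)
  qed
  have pos: "0 \<le> l * CORE_Delta p l n" unfolding lD using r1 y by (simp add: ln_le_zero_iff)
  have "exp (- l * CORE_Delta p l n) = 1 - exp (- y)"
    using lD r1 by (simp del: exp_minus)
  moreover have "l * CORE_Delta p l n \<le> - ln (y / (1 + y))"
    unfolding lD using e2 y by (simp add: ln_mono)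
  moreover have "- ln (y / (1 + y)) = ln ((1 + y) / y)" using y by (simp add: ln_div)
  moreover have "(1 + y) / y \<le> real n * (1 + 1 / c)"
    using y c nr n unfolding y_def by (simp add: field_simps)
  moreover have "ln (real n * (1 + 1 / c)) = ln (real n) + ln (1 + 1 / c)"
    proof - have "0 < 1 + 1 / c" using c by (simp add: add_pos_pos) then show ?thesis using nr ln_mult[of "real n" "1 + 1 / c"] by simp qed
  moreover have "ln ((1 + y) / y) \<le> ln (real n * (1 + 1 / c))"
    using y \<open>(1 + y) / y \<le> real n * (1 + 1 / c)\<close> by (intro ln_mono) auto
  ultimately show ?thesis using pos l e1 unfolding y_def
    by (auto simp: zero_le_mult_iff)
qed

theorem theorem3:
  fixes p l :: real
  assumes "0 < p" "p < 1" "0 < l"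
  shows "(\<lambda>n::nat. expected_CORE_RT l (CORE_Delta p l n) n) \<in> O(\<lambda>n. ln (real n) / l)"
proof (rule bigoI)
  define c where "c = - ln p"
  define K where "K = ln (1 + 1 / c)"
  have c: "0 < c" unfolding c_def using assms by simp
  have K: "0 \<le> K" unfolding K_def using c by simp
  show "\<forall>\<^sub>F n in at_top. norm (expected_CORE_RT l (CORE_Delta p l n) n) \<le> (1 + K + c) * norm (ln (real n) / l)"
    using eventually_ge_at_top[of "3::nat"]
  proof eventually_elim
    case (elim n)
    let ?D = "CORE_Delta p l n"
    have n1: "1 \<le> n" using elim by simp
    have df: "0 \<le> ?D" "exp (- l * ?D) \<le> c / real n" "l * ?D \<le> ln (real n) + K"
      using delta_facts[OF assms n1] unfolding c_def K_def by auto
    have rt: "0 \<le> expected_CORE_RT l ?D n" "expected_CORE_RT l ?D n \<le> ?D + real n * (exp (- l * ?D) / l)"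
      using RT_bound[OF assms(3) df(1) n1] by auto
    have "real n * (exp (- l * ?D) / l) \<le> real n * (c / real n / l)"
      using df(2) assms(3) by (intro mult_left_mono divide_right_mono) auto
    also have "\<dots> = c / l" using n1 by simp
    finally have e1: "expected_CORE_RT l ?D n \<le> ?D + c / l" using rt by linarith
    have "?D \<le> (ln (real n) + K) / l" using df(3) assms(3) by (simp add: field_simps)
    with e1 have e2: "expected_CORE_RT l ?D n \<le> (ln (real n) + K + c) / l"
      by (simp add: add_divide_distrib)
    have ln1: "1 \<le> ln (real n)"
    proof -
      have "exp 1 \<le> (3::real)" using exp_le by simp
      also have "\<dots> \<le> real n" using elim by simp
      finally have "exp 1 \<le> real n" .
      then have "ln (exp 1) \<le> ln (real n)" by (intro ln_mono) auto
      then show ?thesis by simp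
    qed
    have "(ln (real n) + K + c) \<le> (1 + K + c) * ln (real n)"
    proof -
      have "(K + c) * 1 \<le> (K + c) * ln (real n)" using ln1 K c by (intro mult_left_mono) auto
      then show ?thesis by (simp add: algebra_simps)
    qed
    then have "(ln (real n) + K + c) / l \<le> (1 + K + c) * ln (real n) / l"
      using assms(3) by (simp add: divide_right_mono)
    then show ?case using e2 rt(1) ln1 assms(3) by simp
  qed
qed

end
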